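(* Let $S_f=\{f_i\ge0: i=1,\ldots,m\}$ be an inequality set in $\mathbf{x}=(x_1,\ldots,x_n)$ and fix the variable order $x_1\prec\cdots\prec x_n$. Then the reduced minimal characterization set of $S_f$ is unique: the equality part $\widetilde{E}$ is uniquely determined by $S_f$, and any two minimal characterization sets of $\{g\ge0: g\in R_f\}$ are trivially equivalent.
   Context: An inequality set is a finite set $S=\{f_i\ge 0: i=1,\ldots,m\}$ with each $f_i$ a nonzero homogeneous linear polynomial in $\mathbf{x}$ with real coefficients; its solutions are the points of $\mathbb{R}^n$ satisfying all inequalities; a subset of $S$ is an inequality set whose polynomials form a subset of $\{f_1,\ldots,f_m\}$. The equality $f_k=0$ is an implied equality of $S$ if $f_k(\mathbf{x})=0$ for every solution of $S$. Inequalities $f_1\ge0,\ldots,f_k\ge0$ imply $f\ge0$ if every $\mathbf{x}$ satisfying the former satisfies $f(\mathbf{x})\ge0$; an inequality of a set is redundant if implied by the other inequalities of the set. Two inequality sets are equivalent if they have the same solution set. A subset $S'$ of $S$ is a minimal characterization set of $S$ if $S'$ is equivalent to $S$ and contains no redundant inequality. Two inequalities $f\ge0$, $g\ge 0$ are trivially equivalent if $f=c\,g$ for some real $c>0$; two inequality sets are trivially equivalent if they have the same number of inequalities and each inequality of either set is trivially equivalent to some inequality of the other. For a finite system $E$ of homogeneous linear equations of rank $\tilde n$, its Gauss–Jordan reduced form (reduced row echelon form) w.r.t. $x_1\prec\cdots\prec x_n$ is the unique equivalent system $\{x_{k_i}-U_i=0: i=1,\ldots,\tilde n\}$, $k_1<\cdots<k_{\tilde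 n}$, each $U_i$ a real linear combination of non-pivot variables. Construction: let $I$ be the set of indices $k$ with $f_k=0$ an implied equality of $S_f$, $E=\{f_k=0:k\in I\}$, and $\widetilde E=\{x_{k_i}-U_i=0\}$ its Gauss–Jordan reduced form; let $R_f$ be the set of nonzero polynomials obtained from $f_j$, $j\notin I$, by substituting $U_i$ for $x_{k_i}$ for all $i$. A reduced minimal characterization set of $S_f$ is $\widetilde{E}\cup S_{r'}$, where $S_{r'}$ is a minimal characterization set of the inequality set $\{g\ge 0: g\in R_f\}$. *)

theory Defs
  imports Complex_Main
begin

text \<open>A homogeneous linear polynomial in x_1,...,x_n is represented by its
coefficient function f :: nat => real (coefficient of x_(k+1) is f k),
with f k = 0 for k >= n. Points of R^n are functions x :: nat => real
vanishing outside {0..<n}. Variable order x_1 < ... < x_n is index order.\<close>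

definition lin_form :: "nat \<Rightarrow> (nat \<Rightarrow> real) \<Rightarrow> bool" where
  "lin_form n f \<longleftrightarrow> (\<forall>k\<ge>n. f k = 0)"

definition lf :: "nat \<Rightarrow> (nat \<Rightarrow> real) \<Rightarrow> (nat \<Rightarrow> real) \<Rightarrow> real" where
  "lf n f x = (\<Sum>k<n. f k * x k)"

definition points :: "nat \<Rightarrow> (nat \<Rightarrow> real) set" where
  "points n = {x. \<forall>k\<ge>n. x k = 0}"

text \<open>An inequality set: finite set of nonzero homogeneous linear forms f (meaning f >= 0).\<close>
definition ineq_set :: "nat \<Rightarrow> (nat \<Rightarrow> real) set \<Rightarrow> bool" where
  "ineq_set n S \<longleftrightarrow> finite S \<and> (\<forall>f\<in>S. lin_form n f \<and> f \<noteq> (\<lambda>_. 0))"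

definition sols :: "nat \<Rightarrow> (nat \<Rightarrow> real) set \<Rightarrow> (nat \<Rightarrow> real) set" where
  "sols n S = {x \<in> points n. \<forall>f\<in>S. 0 \<le> lf n f x}"

definition implied_eq :: "nat \<Rightarrow> (nat \<Rightarrow> real) set \<Rightarrow> (nat \<Rightarrow> real) \<Rightarrow> bool" where
  "implied_eq n S f \<longleftrightarrow> (\<forall>x\<in>sols n S. lf n f x = 0)"

definition impl_eqs :: "nat \<Rightarrow> (nat \<Rightarrow> real) set \<Rightarrow> (nat \<Rightarrow> real) set" where
  "impl_eqs n S = {f \<in> S. implied_eq n S f}"

definition implies_ineq :: "nat \<Rightarrow> (nat \<Rightarrow> real) set \<Rightarrow> (nat \<Rightarrow> real) \<Rightarrow> bool" where
  "implies_ineq n T f \<longleftrightarrow> (\<forall>x\<in>sols n T. 0 \<le> lf n f x)"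

definition redundant :: "nat \<Rightarrow> (nat \<Rightarrow> real) set \<Rightarrow> (nat \<Rightarrow> real) \<Rightarrow> bool" where
  "redundant n S f \<longleftrightarrow> implies_ineq n (S - {f}) f"

definition equiv_sets :: "nat \<Rightarrow> (nat \<Rightarrow> real) set \<Rightarrow> (nat \<Rightarrow> real) set \<Rightarrow> bool" where
  "equiv_sets n S T \<longleftrightarrow> sols n S = sols n T"

definition min_char :: "nat \<Rightarrow> (nat \<Rightarrow> real) set \<Rightarrow> (nat \<Rightarrow> real) set \<Rightarrow> bool" where
  "min_char n S S' \<longleftrightarrow> S' \<subseteq> S \<and> equiv_sets n S' S \<and> (\<forall>f\<in>S'. \<not> redundant n S' f)"

definition triv_equiv :: "(nat \<Rightarrow> real) \<Rightarrow> (nat \<Rightarrow> real) \<Rightarrow> bool" where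
  "triv_equiv f g \<longleftrightarrow> (\<exists>c>0. f = (\<lambda>k. c * g k))"

definition triv_equiv_sets :: "(nat \<Rightarrow> real) set \<Rightarrow> (nat \<Rightarrow> real) set \<Rightarrow> bool" where
  "triv_equiv_sets S T \<longleftrightarrow> card S = card T \<and>
     (\<forall>f\<in>S. \<exists>g\<in>T. triv_equiv f g) \<and> (\<forall>g\<in>T. \<exists>f\<in>S. triv_equiv g f)"

text \<open>Gauss-Jordan reduced form (reduced row echelon form, columns in the order
x_1,...,x_n): the system x_(k_i) - U_i = 0, i < length ks, given by pivot list ks
(strictly increasing, all < n) and list Us of linear forms U_i; each U_i involves only
non-pivot variables, and only variables after its pivot (the pivot is the leading
entry of its row).\<close>
definition gj_reduced :: "nat \<Rightarrow> (nat \<Rightarrow> real) set \<Rightarrow> nat list \<Rightarrow> (nat \<Rightarrow> real) list \<Rightarrow> bool" where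
  "gj_reduced n E ks Us \<longleftrightarrow>
     length Us = length ks \<and> sorted_wrt (<) ks \<and> (\<forall>k\<in>set ks. k < n) \<and>
     (\<forall>i<length ks. lin_form n (Us ! i) \<and>
        (\<forall>l\<in>set ks. (Us ! i) l = 0) \<and> (\<forall>l\<le>ks ! i. (Us ! i) l = 0)) \<and>
     {x \<in> points n. \<forall>i<length ks. x (ks ! i) = lf n (Us ! i) x}
       = {x \<in> points n. \<forall>f\<in>E. lf n f x = 0}"

text \<open>Substituting U_i for x_(k_i) in f, for all i.\<close>
definition subst_piv :: "nat list \<Rightarrow> (nat \<Rightarrow> real) list \<Rightarrow> (nat \<Rightarrow> real) \<Rightarrow> (nat \<Rightarrow> real)" where
  "subst_piv ks Us f = (\<lambda>l. (if l \<in> set ks then 0 else f l) +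
                            (\<Sum>i<length ks. f (ks ! i) * (Us ! i) l))"

definition reduced_set :: "nat \<Rightarrow> (nat \<Rightarrow> real) set \<Rightarrow> nat list \<Rightarrow> (nat \<Rightarrow> real) list \<Rightarrow> (nat \<Rightarrow> real) set" where
  "reduced_set n S ks Us =
     {g. \<exists>f\<in>S - impl_eqs n S. g = subst_piv ks Us f \<and> g \<noteq> (\<lambda>_. 0)}"

end

theory Submission
  imports Defs
begin

lemma lf_comb: "lf n f (\<lambda>k. a * x k + b * y k) = a * lf n f x + b * lf n f y"
  by (simp add: lf_def sum.distrib sum_distrib_left algebra_simps)

lemma lf_addsc: "lf n f (\<lambda>k. z k + e * w k) = lf n f z + e * lf n f w"
  by (simp add: lf_def sum.distrib sum_distrib_left algebra_simps)

lemma lf_scale: "lf n f (\<lambda>k. a * x k) = a * lf n f x"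
  by (simp add: lf_def sum_distrib_left algebra_simps)

lemma lf_scale_form: "lf n (\<lambda>k. a * f k) x = a * lf n f x"
  by (simp add: lf_def sum_distrib_left algebra_simps)

lemma lf_sum: "lf n f (\<lambda>k. \<Sum>g\<in>A. X g k) = (\<Sum>g\<in>A. lf n f (X g))"
  unfolding lf_def sum_distrib_left by (rule sum.swap)

lemma lf_unit: "l < n \<Longrightarrow> lf n f (\<lambda>m. if m = l then 1 else 0) = f l"
  by (simp add: lf_def if_distrib cong: if_cong)

lemma lin_nonzero:
  assumes "lin_form n f" "f \<noteq> (\<lambda>_. 0)"
  obtains k where "k < n" "f k \<noteq> 0"
proof -
  have "\<exists>k<n. f k \<noteq> 0"
  proof (rule ccontr)
    assume "\<not> ?thesis"
    then have "f = (\<lambda>_. 0)" using assms(1) unfolding lin_form_def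
      by (metis not_le)
    then show False using assms(2) by simp
  qed
  then show ?thesis using that by blast
qed

lemma local_cone:
  assumes "finite T" "z \<in> sols n T" "w \<in> points n"
  shows "(\<exists>e>0. (\<lambda>k. z k + e * w k) \<in> sols n T) \<longleftrightarrow> (\<forall>g\<in>T. lf n g z = 0 \<longrightarrow> 0 \<le> lf n g w)"
proof
  assume "\<exists>e>0. (\<lambda>k. z k + e * w k) \<in> sols n T"
  then obtain e where e: "e > 0" "(\<lambda>k. z k + e * w k) \<in> sols n T" by blast
  show "\<forall>g\<in>T. lf n g z = 0 \<longrightarrow> 0 \<le> lf n g w"
  proof (intro ballI impI)
    fix g assume "g \<in> T" "lf n g z = 0"
    have "0 \<le> lf n g (\<lambda>k. z k + e * w k)" using e(2) \<open>g \<in> T\<close> unfolding sols_def by blast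
    then have "0 \<le> e * lf n g w" unfolding lf_addsc using \<open>lf n g z = 0\<close> by simp
    then show "0 \<le> lf n g w" using e(1) by (simp add: zero_le_mult_iff)
  qed
next
  assume A: "\<forall>g\<in>T. lf n g z = 0 \<longrightarrow> 0 \<le> lf n g w"
  have "\<forall>g\<in>T. eventually (\<lambda>e. 0 \<le> lf n g z + e * lf n g w) (at_right (0::real))"
  proof
    fix g assume g: "g \<in> T"
    have z0: "0 \<le> lf n g z" using assms(2) g unfolding sols_def by auto
    show "eventually (\<lambda>e. 0 \<le> lf n g z + e * lf n g w) (at_right (0::real))"
    proof (cases "lf n g z = 0")
      case True
      have "0 \<le> lf n g w" using A g True by blast
      then show ?thesis unfolding eventually_at_right_field using True
        by (intro exI[of _ 1]) simp
    next
      case False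
      then have pos: "0 < lf n g z" using z0 by simp
      have "((\<lambda>e. lf n g z + e * lf n g w) \<longlongrightarrow> lf n g z + 0 * lf n g w) (at_right (0::real))"
        by (intro tendsto_intros)
      then have "((\<lambda>e. lf n g z + e * lf n g w) \<longlongrightarrow> lf n g z) (at_right (0::real))" by simp
      from order_tendstoD(1)[OF this pos] show ?thesis
        by (rule eventually_mono) simp
    qed
  qed
  then have "eventually (\<lambda>e. \<forall>g\<in>T. 0 \<le> lf n g z + e * lf n g w) (at_right (0::real))"
    by (rule eventually_ball_finite[OF assms(1)])
  then obtain b::real where b: "b > 0" "\<forall>y>0. y < b \<longrightarrow> (\<forall>g\<in>T. 0 \<le> lf n g z + y * lf n g w)"
    unfolding eventually_at_right_field by blast
  have "(\<lambda>k. z k + (b/2) * w k) \<in> points n" using assms(2,3) unfolding sols_def points_def by simp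
  moreover have "\<forall>g\<in>T. 0 \<le> lf n g (\<lambda>k. z k + (b/2) * w k)"
    unfolding lf_addsc using b(2)[rule_format, of "b/2"] b(1) by simp
  ultimately have "(\<lambda>k. z k + (b/2) * w k) \<in> sols n T" unfolding sols_def by blast
  then show "\<exists>e>0. (\<lambda>k. z k + e * w k) \<in> sols n T" using b(1) by (intro exI[of _ "b/2"]) simp
qed

lemma ineq_imp_mult:
  assumes lf: "lin_form n f" and lg: "lin_form n g" and nz: "f \<noteq> (\<lambda>_. 0)"
    and H: "\<forall>w\<in>points n. 0 \<le> lf n f w \<longrightarrow> 0 \<le> lf n g w"
  shows "\<exists>c\<ge>0. g = (\<lambda>k. c * f k)"
proof -
  obtain k where k: "k < n" "f k \<noteq> 0" using lin_nonzero[OF lf nz] by blast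
  define e where "e = (\<lambda>m::nat. if m = k then (1::real) else 0)"
  have ep: "e \<in> points n" using k unfolding e_def points_def by auto
  have le: "lf n h e = h k" for h using lf_unit[OF k(1)] unfolding e_def by simp
  define c where "c = g k / f k"
  have eq: "lf n g w = c * lf n f w" if w: "w \<in> points n" for w
  proof -
    define w' where "w' = (\<lambda>m. w m + (- (lf n f w / f k)) * e m)"
    have w'p: "w' \<in> points n" using w ep unfolding w'_def points_def by auto
    have "lf n f w' = 0" unfolding w'_def lf_addsc le using k by simp
    then have "0 \<le> lf n f w'" by simp
    then have gw0: "0 \<le> lf n g w'" using H w'p by blast
    moreover have "(\<lambda>m. (-1) * w' m) \<in> points n" using w'p unfolding points_def by auto
    moreover have "lf n f (\<lambda>m. (-1) * w' m) = 0" unfolding lf_scale using \<open>lf n f w' = 0\<close> by simp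
    ultimately have "0 \<le> lf n g (\<lambda>m. (-1) * w' m)" using H by (metis order_refl)
    then have "0 \<le> - lf n g w'" unfolding lf_scale by simp
    then have "lf n g w' = 0" using gw0 by linarith
    then have "lf n g w = lf n f w / f k * g k" unfolding w'_def lf_addsc le by simp
    then show ?thesis unfolding c_def by simp
  qed
  have "g = (\<lambda>l. c * f l)"
  proof
    fix l
    show "g l = c * f l"
    proof (cases "l < n")
      case True
      have "(\<lambda>m. if m = l then 1 else 0::real) \<in> points n" using True unfolding points_def by auto
      from eq[OF this] show ?thesis using lf_unit[OF True] by simp
    next
      case False
      then show ?thesis using lf lg unfolding lin_form_def by simp
    qed
  qed
  moreover have "c \<ge> 0"
  proof -
    have p: "(\<lambda>m. f k * e m) \<in> points n" using ep unfolding points_def by auto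
    have "lf n f (\<lambda>m. f k * e m) = f k * f k" by (simp add: lf_scale le)
    then have "0 < lf n f (\<lambda>m. f k * e m)" using k by (simp add: not_square_less_zero less_le)
    then have "0 \<le> lf n g (\<lambda>m. f k * e m)" using H p by (meson less_imp_le)
    then have "0 \<le> c * (f k * f k)" using eq[OF p] \<open>lf n f (\<lambda>m. f k * e m) = f k * f k\<close> by simp
    moreover have p2: "0 < f k * f k" using k(2) by (simp add: not_square_less_zero less_le)
    ultimately show ?thesis unfolding zero_le_mult_iff by linarith
  qed
  ultimately show ?thesis by blast
qed

lemma half:
  assumes finR: "finite R" and Rf: "\<forall>h\<in>R. lin_form n h \<and> h \<noteq> (\<lambda>_. 0)"
    and x0p: "x0 \<in> points n" and x0pos: "\<forall>h\<in>R. 0 < lf n h x0"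
    and M1: "min_char n R T1" and M2: "min_char n R T2" and fT: "f \<in> T1"
  shows "\<exists>g\<in>T2. triv_equiv f g"
proof -
  have T1R: "T1 \<subseteq> R" and T2R: "T2 \<subseteq> R" using M1 M2 unfolding min_char_def by auto
  have fin1: "finite T1" and fin2: "finite T2" using T1R T2R finR finite_subset by auto
  have s12: "sols n T1 = sols n T2" using M1 M2 unfolding min_char_def equiv_sets_def by simp
  have "\<not> redundant n T1 f" using M1 fT unfolding min_char_def by blast
  then obtain y where y: "y \<in> sols n (T1 - {f})" "lf n f y < 0"
    unfolding redundant_def implies_ineq_def by (auto simp: not_le)
  have fR: "f \<in> R" using fT T1R by auto
  define a where "a = lf n f x0"
  define b where "b = - lf n f y"
  have a: "a > 0" using x0pos fR unfolding a_def by auto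
  have b: "b > 0" using y(2) unfolding b_def by simp
  define z where "z = (\<lambda>k. a * y k + b * x0 k)"
  have zp: "z \<in> points n" using y(1) x0p unfolding z_def points_def sols_def by simp
  have fz: "lf n f z = 0" unfolding z_def lf_comb a_def b_def by simp
  have hz: "0 < lf n h z" if "h \<in> T1" "h \<noteq> f" for h
  proof -
    have "0 \<le> lf n h y" using y(1) that unfolding sols_def by blast
    moreover have "0 < lf n h x0" using x0pos that T1R by auto
    ultimately show ?thesis unfolding z_def lf_comb using a b
      by (simp add: add_nonneg_pos)
  qed
  have "0 \<le> lf n h z" if "h \<in> T1" for h
  proof (cases "h = f")
    case True then show ?thesis using fz by simp
  next
    case False then show ?thesis using hz[OF that] by simp
  qed
  then have zs1: "z \<in> sols n T1" unfolding sols_def using zp by blast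
  have zs2: "z \<in> sols n T2" using zs1 s12 by simp
  have key: "0 \<le> lf n f w \<longleftrightarrow> (\<forall>g\<in>T2. lf n g z = 0 \<longrightarrow> 0 \<le> lf n g w)" if w: "w \<in> points n" for w
  proof -
    have "(\<forall>g\<in>T1. lf n g z = 0 \<longrightarrow> 0 \<le> lf n g w) \<longleftrightarrow> 0 \<le> lf n f w"
      using fT fz hz by (metis less_irrefl)
    moreover have "(\<exists>e>0. (\<lambda>k. z k + e * w k) \<in> sols n T1) \<longleftrightarrow> (\<forall>g\<in>T1. lf n g z = 0 \<longrightarrow> 0 \<le> lf n g w)"
      by (rule local_cone[OF fin1 zs1 w])
    moreover have "(\<exists>e>0. (\<lambda>k. z k + e * w k) \<in> sols n T2) \<longleftrightarrow> (\<forall>g\<in>T2. lf n g z = 0 \<longrightarrow> 0 \<le> lf n g w)"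
      by (rule local_cone[OF fin2 zs2 w])
    ultimately show ?thesis using s12 by simp
  qed
  have flin: "lin_form n f" and fnz: "f \<noteq> (\<lambda>_. 0)" using Rf fR by auto
  obtain k where k: "k < n" "f k \<noteq> 0" using lin_nonzero[OF flin fnz] by blast
  define w where "w = (\<lambda>m::nat. - f k * (if m = k then 1 else 0::real))"
  have wp: "w \<in> points n" using k unfolding w_def points_def by auto
  have "lf n f w = - f k * f k" unfolding w_def lf_scale lf_unit[OF k(1)] by simp
  moreover have p2: "0 < f k * f k" using k(2) by (simp add: not_square_less_zero less_le)
  ultimately have "\<not> 0 \<le> lf n f w" by simp
  then obtain g where g: "g \<in> T2" "lf n g z = 0" "lf n g w < 0" using key[OF wp] by (auto simp: not_le)
  have glin: "lin_form n g" and gnz: "g \<noteq> (\<lambda>_. 0)" using Rf g(1) T2R by auto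
  have "\<forall>w\<in>points n. 0 \<le> lf n f w \<longrightarrow> 0 \<le> lf n g w" using key g(1,2) by blast
  then obtain c where c: "c \<ge> 0" "g = (\<lambda>k. c * f k)" using ineq_imp_mult[OF flin glin fnz] by blast
  have "c \<noteq> 0" using c gnz by auto
  then have cpos: "c > 0" using c(1) by simp
  have "f = (\<lambda>k. (1/c) * g k)" using c(2) cpos by auto
  then have "triv_equiv f g" unfolding triv_equiv_def using cpos by (intro exI[of _ "1/c"]) simp
  then show ?thesis using g(1) by blast
qed

lemma inj_aux:
  assumes M: "min_char n R T" and f1: "f1 \<in> T" and f2: "f2 \<in> T"
    and t1: "triv_equiv f1 g" and t2: "triv_equiv f2 g"
  shows "f1 = f2"
proof (rule ccontr)
  assume ne: "f1 \<noteq> f2"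
  obtain c where c: "c > 0" "f1 = (\<lambda>k. c * g k)" using t1 unfolding triv_equiv_def by blast
  obtain d where d: "d > 0" "f2 = (\<lambda>k. d * g k)" using t2 unfolding triv_equiv_def by blast
  have "redundant n T f1" unfolding redundant_def implies_ineq_def
  proof
    fix x assume x: "x \<in> sols n (T - {f1})"
    have "f2 \<in> T - {f1}" using f2 ne by auto
    then have "0 \<le> lf n f2 x" using x unfolding sols_def by blast
    then have "0 \<le> d * lf n g x" using d(2) lf_scale_form[of n d g x] by simp
    then have "0 \<le> lf n g x" using d(1) by (simp add: zero_le_mult_iff)
    then show "0 \<le> lf n f1 x" using c lf_scale_form[of n c g x] by simp
  qed
  then show False using M f1 unfolding min_char_def by blast
qed

lemma card_le_aux:
  assumes "finite T2" "\<forall>f\<in>T1. \<exists>g\<in>T2. triv_equiv f g" "min_char n R T1"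
  shows "card T1 \<le> card T2"
proof -
  define phi where "phi = (\<lambda>f. SOME g. g \<in> T2 \<and> triv_equiv f g)"
  have ph: "phi f \<in> T2 \<and> triv_equiv f (phi f)" if "f \<in> T1" for f
    unfolding phi_def using assms(2) that by (metis (mono_tags, lifting) someI_ex)
  have "inj_on phi T1"
    by (rule inj_onI) (metis ph inj_aux[OF assms(3)])
  moreover have "phi ` T1 \<subseteq> T2" using ph by auto
  ultimately show ?thesis using card_inj_on_le assms(1) by blast
qed

lemma part2_core:
  assumes finR: "finite R" and Rf: "\<forall>h\<in>R. lin_form n h \<and> h \<noteq> (\<lambda>_. 0)"
    and x0p: "x0 \<in> points n" and x0pos: "\<forall>h\<in>R. 0 < lf n h x0"
    and M1: "min_char n R T1" and M2: "min_char n R T2"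
  shows "triv_equiv_sets T1 T2"
proof -
  have fin1: "finite T1" and fin2: "finite T2" using M1 M2 finR finite_subset unfolding min_char_def by auto
  have A: "\<forall>f\<in>T1. \<exists>g\<in>T2. triv_equiv f g" using half[OF finR Rf x0p x0pos M1 M2] by blast
  have B: "\<forall>f\<in>T2. \<exists>g\<in>T1. triv_equiv f g" using half[OF finR Rf x0p x0pos M2 M1] by blast
  have "card T1 \<le> card T2" by (rule card_le_aux[OF fin2 A M1])
  moreover have "card T2 \<le> card T1" by (rule card_le_aux[OF fin1 B M2])
  ultimately show ?thesis unfolding triv_equiv_sets_def using A B by simp
qed

definition vecp :: "nat list \<Rightarrow> (nat \<Rightarrow> real) list \<Rightarrow> nat \<Rightarrow> nat \<Rightarrow> real" where
  "vecp ks Us l = (\<lambda>m. (if m = l then 1 else 0) + (\<Sum>i<length ks. if m = ks ! i then (Us ! i) l else 0))"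

lemma vecp_nonpiv: "m \<notin> set ks \<Longrightarrow> vecp ks Us l m = (if m = l then 1 else 0)"
proof -
  assume m: "m \<notin> set ks"
  have "\<forall>i<length ks. m \<noteq> ks ! i" using m nth_mem by metis
  then show ?thesis unfolding vecp_def by simp
qed

lemma vecp_piv:
  assumes "distinct ks" "j < length ks" "l \<notin> set ks"
  shows "vecp ks Us l (ks ! j) = (Us ! j) l"
proof -
  have "ks ! j \<noteq> l" using assms nth_mem by metis
  moreover have "(\<Sum>i<length ks. if ks ! j = ks ! i then (Us ! i) l else 0)
      = (\<Sum>i<length ks. if i = j then (Us ! i) l else 0)"
    by (rule sum.cong) (use assms nth_eq_iff_index_eq in auto)
  ultimately show ?thesis unfolding vecp_def using assms(2) by simp
qed

lemma lf_vecp: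
  assumes "l < n" "\<forall>m\<in>set ks. U m = 0"
  shows "lf n U (vecp ks Us l) = U l"
proof -
  have "U m * vecp ks Us l m = (if m = l then U l else 0)" for m
  proof (cases "m \<in> set ks")
    case True then show ?thesis using assms(2) by auto
  next
    case False then show ?thesis using vecp_nonpiv[OF False] by simp
  qed
  then have "lf n U (vecp ks Us l) = (\<Sum>m<n. if m = l then U l else 0)" unfolding lf_def by simp
  also have "\<dots> = U l" using assms(1) by simp
  finally show ?thesis .
qed

lemma gj_facts:
  assumes "gj_reduced n E ks Us"
  shows "length Us = length ks" "distinct ks" "sorted ks" "\<forall>k\<in>set ks. k < n"
    "\<forall>i<length ks. lin_form n (Us ! i)" "\<forall>i<length ks. \<forall>l\<in>set ks. (Us ! i) l = 0"
    "\<forall>i<length ks. \<forall>l\<le>ks ! i. (Us ! i) l = 0"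
    "{x \<in> points n. \<forall>i<length ks. x (ks ! i) = lf n (Us ! i) x} = {x \<in> points n. \<forall>f\<in>E. lf n f x = 0}"
  using assms unfolding gj_reduced_def strict_sorted_iff by auto

lemma vecp_V:
  assumes g: "gj_reduced n E ks Us" and l: "l < n" "l \<notin> set ks"
  shows "vecp ks Us l \<in> {x \<in> points n. \<forall>i<length ks. x (ks ! i) = lf n (Us ! i) x}"
proof -
  note F = gj_facts[OF g]
  have "vecp ks Us l \<in> points n"
    unfolding points_def
  proof (intro CollectI allI impI)
    fix m assume "n \<le> m"
    then have "m \<notin> set ks" "m \<noteq> l" using F(4) l by auto
    then show "vecp ks Us l m = 0" using vecp_nonpiv by simp
  qed
  moreover have "\<forall>i<length ks. vecp ks Us l (ks ! i) = lf n (Us ! i) (vecp ks Us l)"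
    using vecp_piv[OF F(2) _ l(2)] lf_vecp[OF l(1)] F(6) by simp
  ultimately show ?thesis by blast
qed

lemma piv_char:
  assumes g: "gj_reduced n E ks Us" and k: "k < n"
  shows "k \<notin> set ks \<longleftrightarrow> (\<exists>x\<in>{x \<in> points n. \<forall>f\<in>E. lf n f x = 0}. x k = 1 \<and> (\<forall>l>k. x l = 0))"
proof
  note F = gj_facts[OF g]
  assume kn: "k \<notin> set ks"
  define x where "x = vecp ks Us k"
  have xV: "x \<in> {x \<in> points n. \<forall>f\<in>E. lf n f x = 0}" using vecp_V[OF g k kn] F(8) unfolding x_def by simp
  have "x k = 1" unfolding x_def using vecp_nonpiv[OF kn] by simp
  moreover have "x l = 0" if "l > k" for l
  proof (cases "l \<in> set ks")
    case True
    then obtain i where i: "i < length ks" "l = ks ! i" by (metis in_set_conv_nth)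
    then show ?thesis unfolding x_def using vecp_piv[OF F(2) i(1) kn] F(7) that by auto
  next
    case False then show ?thesis unfolding x_def using vecp_nonpiv[OF False] that by simp
  qed
  ultimately show "\<exists>x\<in>{x \<in> points n. \<forall>f\<in>E. lf n f x = 0}. x k = 1 \<and> (\<forall>l>k. x l = 0)" using xV by blast
next
  note F = gj_facts[OF g]
  assume "\<exists>x\<in>{x \<in> points n. \<forall>f\<in>E. lf n f x = 0}. x k = 1 \<and> (\<forall>l>k. x l = 0)"
  then obtain x where x: "x \<in> {x \<in> points n. \<forall>f\<in>E. lf n f x = 0}" "x k = 1" "\<forall>l>k. x l = 0" by blast
  show "k \<notin> set ks"
  proof
    assume "k \<in> set ks"
    then obtain i where i: "i < length ks" "k = ks ! i" by (metis in_set_conv_nth)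
    have "x (ks ! i) = lf n (Us ! i) x" using x(1) F(8) i(1) by blast
    also have "\<dots> = (\<Sum>m<n. 0)" unfolding lf_def
    proof (rule sum.cong)
      fix m
      show "(Us ! i) m * x m = 0"
      proof (cases "m \<le> k")
        case True then show ?thesis using F(7) i by auto
      next
        case False then show ?thesis using x(3) by auto
      qed
    qed simp
    finally show False using x(2) i(2) by simp
  qed
qed

lemma part1:
  assumes g1: "gj_reduced n E ks1 Us1" and g2: "gj_reduced n E ks2 Us2"
  shows "ks1 = ks2 \<and> Us1 = Us2"
proof -
  note F1 = gj_facts[OF g1] and F2 = gj_facts[OF g2]
  have "set ks1 = set ks2"
  proof (intro set_eqI)
    fix k
    show "k \<in> set ks1 \<longleftrightarrow> k \<in> set ks2"
    proof (cases "k < n")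
      case True then show ?thesis using piv_char[OF g1 True] piv_char[OF g2 True] by blast
    next
      case False then show ?thesis using F1(4) F2(4) by auto
    qed
  qed
  then have ks: "ks1 = ks2" using sorted_distinct_set_unique F1(2,3) F2(2,3) by blast
  have "Us1 ! i = Us2 ! i" if i: "i < length ks1" for i
  proof
    fix l
    show "(Us1 ! i) l = (Us2 ! i) l"
    proof (cases "l < n")
      case False then show ?thesis using F1(5) F2(5) i ks unfolding lin_form_def by auto
    next
      case True
      show ?thesis
      proof (cases "l \<in> set ks1")
        case True then show ?thesis using F1(6) F2(6) i ks by auto
      next
        case False
        have "vecp ks1 Us1 l \<in> {x \<in> points n. \<forall>i<length ks2. x (ks2 ! i) = lf n (Us2 ! i) x}"
          using vecp_V[OF g1 \<open>l < n\<close> False] F1(8) F2(8) by simp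
        then have "vecp ks1 Us1 l (ks1 ! i) = lf n (Us2 ! i) (vecp ks1 Us1 l)" using i ks by auto
        also have "\<dots> = (Us2 ! i) l" using lf_vecp[OF \<open>l < n\<close>] F2(6) i ks by simp
        finally show ?thesis using vecp_piv[OF F1(2) i False] by simp
      qed
    qed
  qed
  then have "Us1 = Us2" using F1(1) F2(1) ks by (simp add: nth_equalityI)
  then show ?thesis using ks by simp
qed

lemma lf_subst:
  assumes d: "distinct ks" and kn: "\<forall>k\<in>set ks. k < n"
    and xV: "\<forall>i<length ks. x (ks ! i) = lf n (Us ! i) x"
  shows "lf n (subst_piv ks Us f) x = lf n f x"
proof -
  have "lf n (subst_piv ks Us f) x = (\<Sum>l<n. (if l \<in> set ks then 0 else f l) * x l)
      + (\<Sum>l<n. \<Sum>i<length ks. f (ks ! i) * ((Us ! i) l * x l))"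
    unfolding subst_piv_def lf_def by (simp add: distrib_right sum.distrib sum_distrib_right mult.assoc)
  also have "(\<Sum>l<n. \<Sum>i<length ks. f (ks ! i) * ((Us ! i) l * x l))
      = (\<Sum>i<length ks. \<Sum>l<n. f (ks ! i) * ((Us ! i) l * x l))" by (rule sum.swap)
  also have "\<dots> = (\<Sum>i<length ks. f (ks ! i) * x (ks ! i))"
  proof (rule sum.cong)
    fix i assume "i \<in> {..<length ks}"
    then have "x (ks ! i) = lf n (Us ! i) x" using xV by auto
    then show "(\<Sum>l<n. f (ks ! i) * ((Us ! i) l * x l)) = f (ks ! i) * x (ks ! i)"
      unfolding lf_def by (simp add: sum_distrib_left)
  qed simp
  also have "\<dots> = (\<Sum>l\<in>set ks. f l * x l)"
    using d by (simp add: sum_list_distinct_conv_sum_set[symmetric] sum_list_sum_nth atLeast0LessThan)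
  also have "\<dots> = (\<Sum>l<n. if l \<in> set ks then f l * x l else 0)"
  proof -
    have "{..<n} \<inter> set ks = set ks" using kn by auto
    then show ?thesis using sum.inter_restrict[of "{..<n}" "\<lambda>l. f l * x l" "set ks"] by simp
  qed
  finally have "lf n (subst_piv ks Us f) x = (\<Sum>l<n. (if l \<in> set ks then 0 else f l) * x l + (if l \<in> set ks then f l * x l else 0))"
    by (simp add: sum.distrib)
  also have "\<dots> = lf n f x" unfolding lf_def by (rule sum.cong) auto
  finally show ?thesis .
qed

theorem theorem6:
  fixes n :: nat and S :: "(nat \<Rightarrow> real) set"
  assumes "ineq_set n S"
  shows "(\<forall>ks1 Us1 ks2 Us2.
            gj_reduced n (impl_eqs n S) ks1 Us1 \<and> gj_reduced n (impl_eqs n S) ks2 Us2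
            \<longrightarrow> ks1 = ks2 \<and> Us1 = Us2)
       \<and> (\<forall>ks Us T1 T2.
            gj_reduced n (impl_eqs n S) ks Us \<and>
            min_char n (reduced_set n S ks Us) T1 \<and> min_char n (reduced_set n S ks Us) T2
            \<longrightarrow> triv_equiv_sets T1 T2)"
proof (intro conjI allI impI)
  fix ks1 Us1 ks2 Us2
  assume "gj_reduced n (impl_eqs n S) ks1 Us1 \<and> gj_reduced n (impl_eqs n S) ks2 Us2"
  then show "ks1 = ks2" using part1 by blast
next
  fix ks1 Us1 ks2 Us2
  assume "gj_reduced n (impl_eqs n S) ks1 Us1 \<and> gj_reduced n (impl_eqs n S) ks2 Us2"
  then show "Us1 = Us2" using part1 by blast
next
  fix ks Us T1 T2
  assume H: "gj_reduced n (impl_eqs n S) ks Us \<and>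
            min_char n (reduced_set n S ks Us) T1 \<and> min_char n (reduced_set n S ks Us) T2"
  then have g: "gj_reduced n (impl_eqs n S) ks Us" and M1: "min_char n (reduced_set n S ks Us) T1"
    and M2: "min_char n (reduced_set n S ks Us) T2" by auto
  note F = gj_facts[OF g]
  define R where "R = reduced_set n S ks Us"
  have finS: "finite S" and Slin: "\<forall>f\<in>S. lin_form n f" using assms unfolding ineq_set_def by auto
  have "R \<subseteq> subst_piv ks Us ` S" unfolding R_def reduced_set_def by auto
  then have finR: "finite R" using finS finite_surj by blast
  have Rf: "\<forall>h\<in>R. lin_form n h \<and> h \<noteq> (\<lambda>_. 0)"
  proof
    fix h assume "h \<in> R"
    then obtain f where f: "f \<in> S" "h = subst_piv ks Us f" "h \<noteq> (\<lambda>_. 0)"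
      unfolding R_def reduced_set_def by auto
    have "lin_form n h" unfolding lin_form_def
    proof (intro allI impI)
      fix l assume l: "n \<le> l"
      have "f l = 0" using Slin f(1) l unfolding lin_form_def by auto
      moreover have "\<forall>i<length ks. (Us ! i) l = 0" using F(5) l unfolding lin_form_def by auto
      ultimately show "h l = 0" unfolding f(2) subst_piv_def by simp
    qed
    then show "lin_form n h \<and> h \<noteq> (\<lambda>_. 0)" using f(3) by simp
  qed
  have solsR: "x \<in> sols n R" if x: "x \<in> sols n S" for x
  proof -
    have xp: "x \<in> points n" using x unfolding sols_def by auto
    have "\<forall>f\<in>impl_eqs n S. lf n f x = 0" using x unfolding impl_eqs_def implied_eq_def by auto
    then have xV: "\<forall>i<length ks. x (ks ! i) = lf n (Us ! i) x" using F(8) xp by blast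
    have "0 \<le> lf n h x" if "h \<in> R" for h
    proof -
      obtain f where f: "f \<in> S" "h = subst_piv ks Us f" using \<open>h \<in> R\<close> unfolding R_def reduced_set_def by auto
      have "lf n h x = lf n f x" using lf_subst[OF F(2) F(4) xV] f(2) by simp
      then show ?thesis using x f(1) unfolding sols_def by auto
    qed
    then show ?thesis using xp unfolding sols_def by blast
  qed
  have exx: "\<exists>x. x \<in> sols n R \<and> 0 < lf n h x" if h: "h \<in> R" for h
  proof -
    obtain f where f: "f \<in> S - impl_eqs n S" "h = subst_piv ks Us f" using h unfolding R_def reduced_set_def by auto
    then have "\<not> implied_eq n S f" unfolding impl_eqs_def by auto
    then obtain x where x: "x \<in> sols n S" "lf n f x \<noteq> 0" unfolding implied_eq_def by auto
    have "0 \<le> lf n f x" using x(1) f(1) unfolding sols_def by auto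
    then have pos: "0 < lf n f x" using x(2) by simp
    have xp: "x \<in> points n" using x unfolding sols_def by auto
    have "\<forall>f\<in>impl_eqs n S. lf n f x = 0" using x unfolding impl_eqs_def implied_eq_def by auto
    then have xV: "\<forall>i<length ks. x (ks ! i) = lf n (Us ! i) x" using F(8) xp by blast
    have "lf n h x = lf n f x" using lf_subst[OF F(2) F(4) xV] f(2) by simp
    then show ?thesis using solsR[OF x(1)] pos by auto
  qed
  define X where "X = (\<lambda>h. SOME x. x \<in> sols n R \<and> 0 < lf n h x)"
  have X: "X h \<in> sols n R \<and> 0 < lf n h (X h)" if "h \<in> R" for h
    unfolding X_def using exx[OF that] by (rule someI_ex)
  define x0 where "x0 = (\<lambda>k. \<Sum>h\<in>R. X h k)"
  have x0p: "x0 \<in> points n" unfolding x0_def points_def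
    using X unfolding sols_def points_def by simp
  have x0pos: "\<forall>h\<in>R. 0 < lf n h x0"
  proof
    fix h assume h: "h \<in> R"
    have "lf n h x0 = (\<Sum>g\<in>R. lf n h (X g))" unfolding x0_def by (rule lf_sum)
    moreover have "lf n h (X h) \<le> (\<Sum>g\<in>R. lf n h (X g))"
      by (rule member_le_sum[OF h _ finR]) (use X h in \<open>auto simp: sols_def\<close>)
    ultimately show "0 < lf n h x0" using X[OF h] by simp
  qed
  show "triv_equiv_sets T1 T2"
    using part2_core[OF finR Rf x0p x0pos] M1 M2 unfolding R_def by blast
qed

end
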